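(* Let $\Gamma$ be a finite vertex-transitive graph and suppose $S$ is a $k$-extended irregular dominating set of $\Gamma$. Then $S$ is optimal and $k=\gamma_e(\Gamma)=\mathrm{diam}(\Gamma)+1$. Moreover, the labels of the $k$ vertices of $S$ are exactly all the elements of $\{0,1,\dots,\mathrm{diam}(\Gamma)\}$.
   Context: Let $\Gamma=(V,E)$ be a finite simple undirected graph with graph distance $d$; $\mathrm{diam}(\Gamma)$ is the largest distance between two vertices. A vertex $v$ carrying a non-negative integer label $\ell$ dominates (covers) exactly the vertices $u$ with $d(u,v)=\ell$; a vertex labeled $0$ dominates only itself. For $k\ge0$, a $k$-extended irregular dominating set is a set $S\subseteq V$ of $k$ vertices together with a labeling $\lambda:S\to\mathbb{Z}_{\ge 0}$ with distinct labels on distinct vertices, such that every vertex of $V$ is dominated by at least one vertex of $S$; it is assumed that some vertex of $S$ has label $0$. The extended irregular domination number $\gamma_e(\Gamma)$ is the minimum cardinality of an extended irregular dominating set of $\Gamma$; a $k$-extended irregular dominating set is optimal if $k=\gamma_e(\Gamma)$. *)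

theory Defs
  imports Main
begin

definition simple_graph :: "'a set \<Rightarrow> ('a \<Rightarrow> 'a \<Rightarrow> bool) \<Rightarrow> bool" where
  "simple_graph V E \<longleftrightarrow> finite V \<and> (\<forall>u\<in>V. \<forall>v\<in>V. E u v \<longleftrightarrow> E v u) \<and> (\<forall>v\<in>V. \<not> E v v)"

inductive walk :: "'a set \<Rightarrow> ('a \<Rightarrow> 'a \<Rightarrow> bool) \<Rightarrow> 'a \<Rightarrow> 'a \<Rightarrow> nat \<Rightarrow> bool"
  for V E where
  walk_nil: "u \<in> V \<Longrightarrow> walk V E u u 0"
| walk_cons: "u \<in> V \<Longrightarrow> w \<in> V \<Longrightarrow> E u w \<Longrightarrow> walk V E w v n \<Longrightarrow> walk V E u v (Suc n)"

definition connected_graph :: "'a set \<Rightarrow> ('a \<Rightarrow> 'a \<Rightarrow> bool) \<Rightarrow> bool" where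
  "connected_graph V E \<longleftrightarrow> (\<forall>u\<in>V. \<forall>v\<in>V. \<exists>n. walk V E u v n)"

definition gdist :: "'a set \<Rightarrow> ('a \<Rightarrow> 'a \<Rightarrow> bool) \<Rightarrow> 'a \<Rightarrow> 'a \<Rightarrow> nat" where
  "gdist V E u v = (LEAST n. walk V E u v n)"

definition diam :: "'a set \<Rightarrow> ('a \<Rightarrow> 'a \<Rightarrow> bool) \<Rightarrow> nat" where
  "diam V E = Max {gdist V E u v | u v. u \<in> V \<and> v \<in> V}"

definition graph_automorphism :: "'a set \<Rightarrow> ('a \<Rightarrow> 'a \<Rightarrow> bool) \<Rightarrow> ('a \<Rightarrow> 'a) \<Rightarrow> bool" where
  "graph_automorphism V E f \<longleftrightarrow> bij_betw f V V \<and> (\<forall>x\<in>V. \<forall>y\<in>V. E x y \<longleftrightarrow> E (f x) (f y))"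

definition vertex_transitive :: "'a set \<Rightarrow> ('a \<Rightarrow> 'a \<Rightarrow> bool) \<Rightarrow> bool" where
  "vertex_transitive V E \<longleftrightarrow> (\<forall>u\<in>V. \<forall>v\<in>V. \<exists>f. graph_automorphism V E f \<and> f u = v)"

definition dominates :: "'a set \<Rightarrow> ('a \<Rightarrow> 'a \<Rightarrow> bool) \<Rightarrow> 'a \<Rightarrow> nat \<Rightarrow> 'a \<Rightarrow> bool" where
  "dominates V E v l u \<longleftrightarrow> gdist V E u v = l"

definition is_eids :: "'a set \<Rightarrow> ('a \<Rightarrow> 'a \<Rightarrow> bool) \<Rightarrow> 'a set \<Rightarrow> ('a \<Rightarrow> nat) \<Rightarrow> bool" where
  "is_eids V E S lab \<longleftrightarrow> S \<subseteq> V \<and> inj_on lab S \<and> (\<exists>v\<in>S. lab v = 0)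
     \<and> (\<forall>u\<in>V. \<exists>v\<in>S. dominates V E v (lab v) u)"

definition k_eids :: "'a set \<Rightarrow> ('a \<Rightarrow> 'a \<Rightarrow> bool) \<Rightarrow> nat \<Rightarrow> 'a set \<Rightarrow> ('a \<Rightarrow> nat) \<Rightarrow> bool" where
  "k_eids V E k S lab \<longleftrightarrow> is_eids V E S lab \<and> card S = k"

definition gamma_e :: "'a set \<Rightarrow> ('a \<Rightarrow> 'a \<Rightarrow> bool) \<Rightarrow> nat" where
  "gamma_e V E = (LEAST k. \<exists>S lab. k_eids V E k S lab)"

definition optimal_eids :: "'a set \<Rightarrow> ('a \<Rightarrow> 'a \<Rightarrow> bool) \<Rightarrow> 'a set \<Rightarrow> ('a \<Rightarrow> nat) \<Rightarrow> bool" where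
  "optimal_eids V E S lab \<longleftrightarrow> is_eids V E S lab \<and> card S = gamma_e V E"

end

theory Submission
  imports Defs
begin

lemma walk_in: "walk V E u v n \<Longrightarrow> u \<in> V \<and> v \<in> V"
  by (induction rule: walk.induct) auto

lemma walk_append: "walk V E u w m \<Longrightarrow> walk V E w v n \<Longrightarrow> walk V E u v (m + n)"
  by (induction rule: walk.induct) (auto intro: walk.intros)

lemma walk_split: "walk V E u v n \<Longrightarrow> m \<le> n \<Longrightarrow> \<exists>w. walk V E u w m \<and> walk V E w v (n - m)"
proof (induction arbitrary: m rule: walk.induct)
  case (walk_nil u)
  then show ?case by (auto intro: walk.intros)
next
  case (walk_cons u w v n)
  show ?case
  proof (cases m)
    case 0
    then show ?thesis using walk_cons by (auto intro: walk.intros)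
  next
    case (Suc m')
    with walk_cons obtain w' where "walk V E w w' m'" "walk V E w' v (n - m')" by fastforce
    then show ?thesis using walk_cons Suc by (auto intro: walk.intros)
  qed
qed

lemma gdist_walk: "connected_graph V E \<Longrightarrow> u \<in> V \<Longrightarrow> v \<in> V \<Longrightarrow> walk V E u v (gdist V E u v)"
  unfolding connected_graph_def gdist_def by (meson LeastI_ex)

lemma gdist_le: "walk V E u v n \<Longrightarrow> gdist V E u v \<le> n"
  unfolding gdist_def by (rule Least_le)

lemma aut_walk: "walk V E u v n \<Longrightarrow> graph_automorphism V E f \<Longrightarrow> walk V E (f u) (f v) n"
proof (induction rule: walk.induct)
  case (walk_nil u)
  then show ?case unfolding graph_automorphism_def by (auto intro: walk.intros bij_betw_apply)
next
  case (walk_cons u w v n)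
  then show ?case unfolding graph_automorphism_def by (auto intro: walk.intros bij_betw_apply)
qed

lemma aut_walk_rev: "graph_automorphism V E f \<Longrightarrow> walk V E (f u) (f v) n \<Longrightarrow> u \<in> V \<Longrightarrow> v \<in> V
   \<Longrightarrow> walk V E u v n"
proof (induction n arbitrary: u)
  case 0
  then have "f u = f v" by (auto elim: walk.cases)
  then have "u = v" using 0 unfolding graph_automorphism_def bij_betw_def inj_on_def by blast
  then show ?case using 0 by (auto intro: walk.intros)
next
  case (Suc n)
  from Suc.prems(2) obtain w where w: "w \<in> V" "E (f u) w" "walk V E w (f v) n"
    by (auto elim: walk.cases)
  then obtain w' where w': "w' \<in> V" "w = f w'"
    using Suc.prems(1) unfolding graph_automorphism_def bij_betw_def by (metis imageE)
  have "E u w'" using Suc.prems w w' unfolding graph_automorphism_def by auto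
  moreover have "walk V E w' v n" using Suc w w' by auto
  ultimately show ?case using Suc.prems w' by (auto intro: walk.intros)
qed

lemma aut_gdist: "graph_automorphism V E f \<Longrightarrow> u \<in> V \<Longrightarrow> v \<in> V
   \<Longrightarrow> gdist V E (f u) (f v) = gdist V E u v"
proof -
  assume a: "graph_automorphism V E f" "u \<in> V" "v \<in> V"
  have "\<And>n. walk V E (f u) (f v) n = walk V E u v n"
    using a aut_walk aut_walk_rev by metis
  then have "walk V E (f u) (f v) = walk V E u v" by blast
  then show ?thesis unfolding gdist_def by simp
qed

definition sph where "sph V E x l = {u\<in>V. gdist V E u x = l}"

lemma sph_card:
  assumes "vertex_transitive V E" "x \<in> V" "y \<in> V"
  shows "card (sph V E x l) = card (sph V E y l)"
proof -
  obtain f where f: "graph_automorphism V E f" "f x = y"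
    using assms unfolding vertex_transitive_def by blast
  have bij: "bij_betw f V V" using f unfolding graph_automorphism_def by auto
  have "f ` sph V E x l = sph V E y l"
  proof
    show "f ` sph V E x l \<subseteq> sph V E y l"
      using f aut_gdist[OF f(1) _ assms(2)] bij_betw_apply[OF bij] unfolding sph_def by auto
  next
    show "sph V E y l \<subseteq> f ` sph V E x l"
    proof
      fix w assume w: "w \<in> sph V E y l"
      then obtain u where u: "u \<in> V" "w = f u" using bij unfolding sph_def bij_betw_def by auto
      then have "gdist V E u x = l" using w f aut_gdist[OF f(1) u(1) assms(2)] unfolding sph_def by auto
      then show "w \<in> f ` sph V E x l" using u unfolding sph_def by auto
    qed
  qed
  moreover have "inj_on f (sph V E x l)"
    using bij unfolding bij_betw_def sph_def by (auto intro: inj_on_subset)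
  ultimately show ?thesis by (metis card_image)
qed

lemma diam_fin: "finite V \<Longrightarrow> finite {gdist V E u v | u v. u \<in> V \<and> v \<in> V}"
proof -
  assume "finite V"
  have "{gdist V E u v | u v. u \<in> V \<and> v \<in> V} = (\<lambda>(u,v). gdist V E u v) ` (V \<times> V)" by auto
  then show ?thesis using \<open>finite V\<close> by simp
qed

lemma gdist_le_diam: "finite V \<Longrightarrow> u \<in> V \<Longrightarrow> v \<in> V \<Longrightarrow> gdist V E u v \<le> diam V E"
  unfolding diam_def by (rule Max_ge) (auto intro: diam_fin)

lemma diam_attained: "finite V \<Longrightarrow> V \<noteq> {} \<Longrightarrow> \<exists>a\<in>V. \<exists>b\<in>V. gdist V E a b = diam V E"
proof -
  assume "finite V" "V \<noteq> {}"
  then have "diam V E \<in> {gdist V E u v | u v. u \<in> V \<and> v \<in> V}"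
  proof -
    obtain x where "x \<in> V" using \<open>V \<noteq> {}\<close> by blast
    then have ne: "{gdist V E u v | u v. u \<in> V \<and> v \<in> V} \<noteq> {}" by blast
    show ?thesis unfolding diam_def by (rule Max_in[OF diam_fin[OF \<open>finite V\<close>] ne])
  qed
  then obtain a b where "diam V E = gdist V E a b" "a \<in> V" "b \<in> V" by blast
  then show ?thesis by metis
qed

lemma sph_nonempty:
  assumes "finite V" "V \<noteq> {}" "connected_graph V E" "vertex_transitive V E" "x \<in> V" "l \<le> diam V E"
  shows "card (sph V E x l) > 0"
proof -
  obtain a b where ab: "a \<in> V" "b \<in> V" "gdist V E a b = diam V E"
    using diam_attained assms by blast
  have wab: "walk V E a b (diam V E)" using gdist_walk[OF assms(3) ab(1,2)] ab by simp
  obtain w where w: "walk V E a w (diam V E - l)" "walk V E w b (diam V E - (diam V E - l))"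
    using walk_split[OF wab, of "diam V E - l"] by auto
  have wl: "walk V E w b l" using w assms(6) by simp
  have wV: "w \<in> V" using walk_in[OF w(1)] by simp
  have "gdist V E w b = l"
  proof (rule ccontr)
    assume "gdist V E w b \<noteq> l"
    then have lt: "gdist V E w b < l" using gdist_le[OF wl] by simp
    have "walk V E a b (diam V E - l + gdist V E w b)"
      using walk_append[OF w(1) gdist_walk[OF assms(3) wV ab(2)]] .
    then have "diam V E \<le> diam V E - l + gdist V E w b" using gdist_le ab by metis
    then show False using lt assms(6) by simp
  qed
  then have "w \<in> sph V E b l" using wV unfolding sph_def by simp
  then have "card (sph V E b l) > 0" using assms(1) unfolding sph_def by (auto simp: card_gt_0_iff)
  then show ?thesis using sph_card[OF assms(4) assms(5) ab(2)] by simp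
qed


lemma key:
  assumes sg: "simple_graph V E" and ne: "V \<noteq> {}" and cg: "connected_graph V E"
    and vt: "vertex_transitive V E" and ei: "is_eids V E S' lab'"
  shows "{0..diam V E} \<subseteq> lab' ` S'"
proof (rule ccontr)
  assume "\<not> {0..diam V E} \<subseteq> lab' ` S'"
  then obtain l0 where l0: "l0 \<in> {0..diam V E}" "l0 \<notin> lab' ` S'" by blast
  have fin: "finite V" using sg unfolding simple_graph_def by simp
  obtain x0 where x0: "x0 \<in> V" using ne by blast
  define n where "n l = card (sph V E x0 l)" for l
  define D where "D = diam V E"
  have SV: "S' \<subseteq> V" and inj: "inj_on lab' S'" and cov: "\<forall>u\<in>V. \<exists>v\<in>S'. dominates V E v (lab' v) u"
    using ei unfolding is_eids_def by auto
  have finS: "finite S'" using SV fin finite_subset by blast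
  have finsph: "\<And>x l. finite (sph V E x l)" using fin unfolding sph_def by simp
  have "V = (\<Union>l\<in>{0..D}. sph V E x0 l)"
    using gdist_le_diam[OF fin _ x0] unfolding sph_def D_def by auto
  moreover have "card (\<Union>l\<in>{0..D}. sph V E x0 l) = (\<Sum>l\<in>{0..D}. card (sph V E x0 l))"
    by (rule card_UN_disjoint) (auto simp: finsph, auto simp: sph_def)
  ultimately have cardV: "card V = sum n {0..D}" unfolding n_def by simp
  have "V \<subseteq> (\<Union>v\<in>S'. sph V E v (lab' v))"
    using cov unfolding sph_def dominates_def by auto
  then have "card V \<le> card (\<Union>v\<in>S'. sph V E v (lab' v))"
    using finS finsph by (intro card_mono) auto
  also have "\<dots> \<le> (\<Sum>v\<in>S'. card (sph V E v (lab' v)))" by (rule card_UN_le[OF finS])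
  also have "\<dots> = (\<Sum>v\<in>S'. n (lab' v))"
    unfolding n_def using sph_card[OF vt _ x0] SV by (intro sum.cong) auto
  also have "\<dots> = sum n (lab' ` S')" using sum.reindex[OF inj, of n] by simp
  also have "\<dots> = sum n (lab' ` S' \<inter> {0..D}) + sum n (lab' ` S' - {0..D})"
    using finS by (simp add: sum.Int_Diff)
  also have "sum n (lab' ` S' - {0..D}) = 0"
  proof -
    have "\<And>l. l \<in> lab' ` S' - {0..D} \<Longrightarrow> n l = 0"
    proof -
      fix l assume "l \<in> lab' ` S' - {0..D}"
      then have "l > D" by auto
      then have "sph V E x0 l = {}" using gdist_le_diam[OF fin _ x0, of _ E] unfolding sph_def D_def by fastforce
      then show "n l = 0" unfolding n_def by simp
    qed
    then show ?thesis by simp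
  qed
  also have "sum n (lab' ` S' \<inter> {0..D}) \<le> sum n ({0..D} - {l0})"
    using l0 by (intro sum_mono2) (auto simp: D_def)
  also have "\<dots> = sum n {0..D} - n l0" using l0 by (simp add: sum_diff1_nat D_def)
  finally have "card V \<le> sum n {0..D} - n l0" by simp
  moreover have "n l0 > 0" unfolding n_def using sph_nonempty[OF fin ne cg vt x0] l0 by simp
  moreover have "n l0 \<le> sum n {0..D}" using l0 by (intro member_le_sum) (auto simp: D_def)
  ultimately show False using cardV by linarith
qed

theorem corollary2p6:
  fixes V :: "'a set" and E :: "'a \<Rightarrow> 'a \<Rightarrow> bool" and S :: "'a set"
    and lab :: "'a \<Rightarrow> nat" and k :: nat
  assumes "simple_graph V E" and "V \<noteq> {}" and "connected_graph V E"
    and "vertex_transitive V E"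
    and "k_eids V E k S lab"
    and "\<forall>v\<in>S. lab v \<le> diam V E"
  shows "optimal_eids V E S lab \<and> k = gamma_e V E \<and> gamma_e V E = diam V E + 1
         \<and> lab ` S = {0..diam V E}"
proof -
  have ei: "is_eids V E S lab" and ck: "card S = k" using assms(5) unfolding k_eids_def by auto
  have inj: "inj_on lab S" using ei unfolding is_eids_def by auto
  have labS: "lab ` S = {0..diam V E}"
    using key[OF assms(1-4) ei] assms(6) by auto
  have kD: "k = diam V E + 1" using card_image[OF inj] labS ck by simp
  have lower: "\<And>k' S' lab'. k_eids V E k' S' lab' \<Longrightarrow> diam V E + 1 \<le> k'"
  proof -
    fix k' S' lab' assume a: "k_eids V E k' S' lab'"
    then have e': "is_eids V E S' lab'" and c': "card S' = k'" unfolding k_eids_def by auto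
    have fin: "finite S'" using e' assms(1) finite_subset unfolding is_eids_def simple_graph_def by blast
    have "diam V E + 1 = card {0..diam V E}" by simp
    also have "\<dots> \<le> card (lab' ` S')" using key[OF assms(1-4) e'] fin by (intro card_mono) auto
    also have "\<dots> \<le> card S'" by (rule card_image_le[OF fin])
    finally show "diam V E + 1 \<le> k'" using c' by simp
  qed
  have g: "gamma_e V E = k"
    unfolding gamma_e_def
  proof (rule Least_equality)
    show "\<exists>S lab. k_eids V E k S lab" using assms(5) by blast
  next
    fix y assume "\<exists>S lab. k_eids V E y S lab"
    then show "k \<le> y" using lower kD by blast
  qed
  show ?thesis using g kD labS ei ck unfolding optimal_eids_def by simp
qed

end
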